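(* Let $c\ge1$ be an integer and $\mathcal{P}$ a $c$-indistinguishable finite bias distribution. Then for every $1\le\ell\le c$, $\mathcal{R}_{\ell,\mathcal{P}}=E_p\bigl[\sqrt{p(1-p)}\bigr]>0$.
   Context: A finite bias distribution is a probability distribution $\mathcal{P}$ supported on a finite subset of $(0,1)$ that is symmetric: it outputs $a$ and $1-a$ with the same probability. $E_p$ is expectation over $p\sim\mathcal{P}$. $\sigma(p)=\sqrt{(1-p)/p}$; for integers $\ell\ge1$, $0\le x\le\ell$, $f_{\ell,x}(p)=p^x(1-p)^{\ell-x}(x\sigma(p)-(\ell-x)\sigma(1-p))$, $R_{\ell,x}=\max\{0,E_p[f_{\ell,x}(p)]\}$, and $\mathcal{R}_{\ell,\mathcal{P}}=E_p[-f_{\ell,0}(p)]-\sum_{x=1}^{\ell-1}\binom{\ell}{x}R_{\ell,x}$. $\mathcal{P}$ is $c$-indistinguishable if $\sum_{x=1}^{\ell-1}\binom{\ell}{x}R_{\ell,x}=0$ for all $2\le\ell\le c$. *)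

theory Defs
  imports "HOL-Probability.Probability"
begin

definition finite_bias_dist :: "real pmf \<Rightarrow> bool" where
  "finite_bias_dist P \<longleftrightarrow> finite (set_pmf P) \<and> set_pmf P \<subseteq> {0<..<1}
     \<and> (\<forall>a. pmf P a = pmf P (1 - a))"

definition E :: "real pmf \<Rightarrow> (real \<Rightarrow> real) \<Rightarrow> real" where
  "E P f = measure_pmf.expectation P f"

definition sigma :: "real \<Rightarrow> real" where
  "sigma p = sqrt ((1 - p) / p)"

definition f_lx :: "nat \<Rightarrow> nat \<Rightarrow> real \<Rightarrow> real" where
  "f_lx l x p = p ^ x * (1 - p) ^ (l - x) * (real x * sigma p - real (l - x) * sigma (1 - p))"

definition R_lx :: "real pmf \<Rightarrow> nat \<Rightarrow> nat \<Rightarrow> real" where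
  "R_lx P l x = max 0 (E P (f_lx l x))"

definition R_cal :: "nat \<Rightarrow> real pmf \<Rightarrow> real" where
  "R_cal l P = E P (\<lambda>p. - f_lx l 0 p) - (\<Sum>x = 1..l - 1. real (l choose x) * R_lx P l x)"

definition indisting :: "nat \<Rightarrow> real pmf \<Rightarrow> bool" where
  "indisting c P \<longleftrightarrow> (\<forall>l. 2 \<le> l \<and> l \<le> c \<longrightarrow>
       (\<Sum>x = 1..l - 1. real (l choose x) * R_lx P l x) = 0)"

end

theory Submission
  imports Defs
begin

lemma D1: "(\<Sum>x\<le>n. real (n choose x) * real x * a^(x-1) * b^(n-x)) = real n * (a+b)^(n-1)"
proof (cases n)
  case 0 then show ?thesis by simp
next
  case (Suc m)
  have "(\<Sum>x\<le>Suc m. real (Suc m choose x) * real x * a^(x-1) * b^(Suc m-x))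
      = (\<Sum>y\<le>m. real (Suc m choose Suc y) * real (Suc y) * a^y * b^(m-y))"
    by (subst sum.atMost_Suc_shift) simp
  also have "\<dots> = (\<Sum>y\<le>m. real (Suc m) * (real (m choose y) * a^y * b^(m-y)))"
  proof (rule sum.cong[OF refl])
    fix y
    have "real (Suc m choose Suc y) * real (Suc y) = real (Suc m) * real (m choose y)"
      using Suc_times_binomial[of y m] by (metis of_nat_mult mult.commute)
    then show "real (Suc m choose Suc y) * real (Suc y) * a^y * b^(m-y) = real (Suc m) * (real (m choose y) * a^y * b^(m-y))"
      by (simp add: algebra_simps)
  qed
  also have "\<dots> = real (Suc m) * (a+b)^m"
    by (simp add: binomial_ring sum_distrib_left)
  finally show ?thesis using Suc by simp
qed

lemma D2: "(\<Sum>x\<le>n. real (n choose x) * real (n-x) * a^x * b^(n-x-1)) = real n * (a+b)^(n-1)"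
proof -
  have "(\<Sum>x\<le>n. real (n choose x) * real (n-x) * a^x * b^(n-x-1))
      = (\<Sum>y\<le>n. real (n choose y) * real y * b^(y-1) * a^(n-y))"
  proof (rule sum.reindex_bij_witness[of _ "\<lambda>x. n - x" "\<lambda>x. n - x"])
    fix y assume "y \<in> {..n}"
    then have y: "y \<le> n" by simp
    then show "real (n choose (n - y)) * real (n - y) * b ^ (n - y - 1) * a ^ (n - (n - y)) =
         real (n choose y) * real (n - y) * a ^ y * b ^ (n - y - 1)"
      using binomial_symmetric[OF y] by simp
  qed auto
  also have "\<dots> = real n * (a+b)^(n-1)" using D1[of n b a] by (simp add: add.commute)
  finally show ?thesis .
qed

lemma psig: "0 < p \<Longrightarrow> p < 1 \<Longrightarrow> p * sigma p = sqrt (p * (1 - p))"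
proof -
  assume h: "0 < p" "p < 1"
  have "sqrt (p * (1 - p)) = sqrt (p^2 * ((1-p)/p))" using h by (simp add: power2_eq_square)
  also have "\<dots> = sqrt (p^2) * sqrt ((1-p)/p)" by (simp only: real_sqrt_mult)
  also have "\<dots> = p * sigma p" using h by (simp add: sigma_def)
  finally show ?thesis by simp
qed

lemma qsig: "0 < p \<Longrightarrow> p < 1 \<Longrightarrow> (1 - p) * sigma (1 - p) = sqrt (p * (1 - p))"
  using psig[of "1-p"] by (simp add: mult.commute)

lemma f_alt:
  assumes "0 < p" "p < 1" "x \<le> l"
  shows "f_lx l x p = sqrt (p*(1-p)) * (real x * p^(x-1) * (1-p)^(l-x) - real (l-x) * p^x * (1-p)^(l-x-1))"
proof -
  have t1: "p^x * (1-p)^(l-x) * (real x * sigma p) = sqrt (p*(1-p)) * (real x * p^(x-1) * (1-p)^(l-x))"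
  proof (cases x)
    case 0 then show ?thesis by simp
  next
    case (Suc y)
    have px: "p^x = p * p^(x-1)" using Suc by simp
    have "p^x * (1-p)^(l-x) * (real x * sigma p) = (p * sigma p) * (real x * p^(x-1) * (1-p)^(l-x))"
      by (subst px) (simp add: mult_ac)
    then show ?thesis using psig[OF assms(1,2)] by simp
  qed
  have t2: "p^x * (1-p)^(l-x) * (real (l-x) * sigma (1-p)) = sqrt (p*(1-p)) * (real (l-x) * p^x * (1-p)^(l-x-1))"
  proof (cases "l-x")
    case 0 then show ?thesis by simp
  next
    case (Suc y)
    have px: "(1-p)^(l-x) = (1-p) * (1-p)^(l-x-1)" using Suc by simp
    have "p^x * (1-p)^(l-x) * (real (l-x) * sigma (1-p)) = ((1-p) * sigma (1-p)) * (real (l-x) * p^x * (1-p)^(l-x-1))"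
      by (subst px) (simp add: mult_ac)
    then show ?thesis using qsig[OF assms(1,2)] by simp
  qed
  have "f_lx l x p = p^x*(1-p)^(l-x)*(real x * sigma p) - p^x*(1-p)^(l-x)*(real (l-x) * sigma (1-p))"
    by (simp add: f_lx_def right_diff_distrib)
  also have "\<dots> = sqrt (p*(1-p)) * (real x * p^(x-1) * (1-p)^(l-x)) - sqrt (p*(1-p)) * (real (l-x) * p^x * (1-p)^(l-x-1))"
    by (simp only: t1 t2)
  finally show ?thesis by (simp only: right_diff_distrib)
qed

lemma key:
  assumes "0 < p" "p < 1"
  shows "(\<Sum>x\<le>n. real (n choose x) * f_lx (Suc n) x p) = - sqrt (p*(1-p))"
proof -
  define s where "s = sqrt (p*(1-p))"
  define b where "b = 1 - p"
  have "(\<Sum>x\<le>n. real (n choose x) * f_lx (Suc n) x p)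
     = (\<Sum>x\<le>n. s * (b * (real (n choose x) * real x * p^(x-1) * b^(n-x))
          - b * (real (n choose x) * real (n-x) * p^x * b^(n-x-1))
          - real (n choose x) * p^x * b^(n-x)))"
  proof (rule sum.cong[OF refl])
    fix x assume "x \<in> {..n}"
    then have x: "x \<le> n" by simp
    have e1: "b^(Suc n - x) = b * b^(n-x)" using x by (simp add: Suc_diff_le)
    have e2: "real (n-x) * b^(n-x) = b * (real (n-x) * b^(n-x-1))"
      by (cases "n-x") auto
    have e3: "real (Suc n - x) = real (n-x) + 1" using x by (simp add: Suc_diff_le)
    show "real (n choose x) * f_lx (Suc n) x p = s * (b * (real (n choose x) * real x * p^(x-1) * b^(n-x))
          - b * (real (n choose x) * real (n-x) * p^x * b^(n-x-1))
          - real (n choose x) * p^x * b^(n-x))"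
    proof -
      have x': "x \<le> Suc n" using x by simp
      have "f_lx (Suc n) x p = s * (real x * p^(x-1) * b^(Suc n-x) - real (Suc n-x) * p^x * b^(Suc n-x-1))"
        using f_alt[OF assms x'] by (simp add: s_def b_def)
      also have "\<dots> = s * (b * (real x * p^(x-1) * b^(n-x)) - b * (real (n-x) * p^x * b^(n-x-1)) - p^x * b^(n-x))"
      proof -
        have "real (Suc n-x) * p^x * b^(Suc n-x-1) = p^x * (real (n-x) * b^(n-x)) + p^x * b^(n-x)"
          using e3 by (simp add: algebra_simps)
        also have "\<dots> = b * (real (n-x) * p^x * b^(n-x-1)) + p^x * b^(n-x)"
          by (simp only: e2) (simp add: mult_ac)
        finally show ?thesis by (simp add: e1 algebra_simps)
      qed
      finally have ff: "f_lx (Suc n) x p = s * (b * (real x * p^(x-1) * b^(n-x)) - b * (real (n-x) * p^x * b^(n-x-1)) - p^x * b^(n-x))" .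
      show ?thesis by (simp only: ff) (simp add: algebra_simps)
    qed
  qed
  also have "\<dots> = s * (b * (\<Sum>x\<le>n. real (n choose x) * real x * p^(x-1) * b^(n-x))
          - b * (\<Sum>x\<le>n. real (n choose x) * real (n-x) * p^x * b^(n-x-1))
          - (\<Sum>x\<le>n. real (n choose x) * p^x * b^(n-x)))"
    by (simp only: sum_subtractf sum_distrib_left right_diff_distrib)
  also have "\<dots> = - s" by (simp only: D1 D2 binomial_ring[symmetric]) (simp add: b_def)
  finally show ?thesis by (simp add: s_def)
qed


lemma E_sum:
  assumes "finite (set_pmf P)"
  shows "E P g = (\<Sum>a\<in>set_pmf P. g a * pmf P a)"
  unfolding E_def by (rule integral_measure_pmf_real) (use assms in auto)

lemma E_sym:
  assumes "finite_bias_dist P"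
  shows "E P (\<lambda>p. g (1 - p)) = E P g"
proof -
  have fin: "finite (set_pmf P)" and sy: "\<And>a. pmf P a = pmf P (1 - a)"
    using assms unfolding finite_bias_dist_def by auto
  have mem: "a \<in> set_pmf P \<Longrightarrow> 1 - a \<in> set_pmf P" for a
    using sy[of a] by (simp add: set_pmf_iff)
  have "(\<Sum>a\<in>set_pmf P. g (1 - a) * pmf P a) = (\<Sum>a\<in>set_pmf P. g a * pmf P a)"
    by (rule sum.reindex_bij_witness[of _ "\<lambda>a. 1 - a" "\<lambda>a. 1 - a"]) (auto simp: mem sy[symmetric])
  then show ?thesis using E_sum[OF fin] by simp
qed

lemma f_sym: "x \<le> l \<Longrightarrow> f_lx l (l - x) p = - f_lx l x (1 - p)"
  by (simp add: f_lx_def algebra_simps)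

theorem proposition3:
  fixes c :: nat and P :: "real pmf"
  assumes "c \<ge> 1" and "finite_bias_dist P" and "indisting c P"
  shows "\<forall>l. 1 \<le> l \<and> l \<le> c \<longrightarrow>
           R_cal l P = E P (\<lambda>p. sqrt (p * (1 - p))) \<and> E P (\<lambda>p. sqrt (p * (1 - p))) > 0"
proof (intro allI impI)
  fix l assume l: "1 \<le> l \<and> l \<le> c"
  have fin: "finite (set_pmf P)" and sub: "set_pmf P \<subseteq> {0<..<1}"
    using assms(2) unfolding finite_bias_dist_def by auto
  define S where "S = set_pmf P"
  define s where "s = (\<lambda>p::real. sqrt (p * (1 - p)))"
  obtain n where n: "l = Suc n" using l by (cases l) auto
  have Elin: "E P (\<lambda>p. \<Sum>x\<in>A. cf x * h x p) = (\<Sum>x\<in>A. cf x * E P (h x))" for A and cf :: "nat \<Rightarrow> real" and h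
    unfolding E_sum[OF fin] by (simp add: sum_distrib_left sum_distrib_right mult_ac sum.swap[of _ A])
  have Eneg: "E P (\<lambda>p. - g p) = - E P g" for g
    unfolding E_sum[OF fin] by (simp add: sum_negf)
  have zero: "E P (f_lx l x) = 0" if x: "x \<in> {1..n}" for x
  proof -
    have le: "E P (f_lx l y) \<le> 0" if y: "y \<in> {1..n}" for y
    proof -
      have "2 \<le> l" "l \<le> c" using l n y by auto
      then have "(\<Sum>x = 1..l - 1. real (l choose x) * R_lx P l x) = 0"
        using assms(3) unfolding indisting_def by blast
      moreover have "\<forall>x\<in>{1..l-1}. 0 \<le> real (l choose x) * R_lx P l x"
        by (auto simp: R_lx_def)
      ultimately have "\<forall>x\<in>{1..l-1}. real (l choose x) * R_lx P l x = 0"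
        using sum_nonneg_eq_0_iff[of "{1..l-1}" "\<lambda>x. real (l choose x) * R_lx P l x"] by simp
      moreover have "y \<in> {1..l-1}" using y n by auto
      ultimately have "real (l choose y) * R_lx P l y = 0" by blast
      moreover have "l choose y > 0" using y n by auto
      ultimately have "R_lx P l y = 0" by simp
      then show ?thesis by (simp add: R_lx_def)
    qed
    have "E P (f_lx l (l - x)) = E P (\<lambda>p. - f_lx l x (1 - p))"
    proof -
      have "x \<le> l" using x n by simp
      then have "f_lx l (l - x) = (\<lambda>p. - f_lx l x (1 - p))" by (simp add: f_sym fun_eq_iff)
      then show ?thesis by simp
    qed
    also have "\<dots> = - E P (f_lx l x)"
      using Eneg[of "\<lambda>p. f_lx l x (1 - p)"] E_sym[OF assms(2), of "f_lx l x"] by simp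
    moreover have "l - x \<in> {1..n}" using x n by auto
    ultimately have "- E P (f_lx l x) \<le> 0" using le[of "l - x"] by simp
    then show ?thesis using le[OF x] by simp
  qed
  have "E P (\<lambda>p. \<Sum>x\<le>n. real (n choose x) * f_lx l x p) = E P (\<lambda>p. - s p)"
    unfolding E_sum[OF fin] n
    by (rule sum.cong[OF refl]) (use sub in \<open>auto simp: key s_def\<close>)
  then have "(\<Sum>x\<le>n. real (n choose x) * E P (f_lx l x)) = - E P s"
    by (simp add: Elin Eneg)
  moreover have "(\<Sum>x\<le>n. real (n choose x) * E P (f_lx l x)) = E P (f_lx l 0)"
  proof -
    have "{..n} = insert 0 {1..n}" by auto
    then show ?thesis using zero by simp
  qed
  ultimately have e0: "E P (f_lx l 0) = - E P s" by simp
  have Rz: "(\<Sum>x = 1..l - 1. real (l choose x) * R_lx P l x) = 0"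
    using zero n by (simp add: R_lx_def)
  have "R_cal l P = E P s"
    unfolding R_cal_def Rz using Eneg[of "f_lx l 0"] e0 by simp
  moreover have "E P s > 0"
  proof -
    have "set_pmf P \<noteq> {}" by (rule set_pmf_not_empty)
    moreover have "\<forall>a\<in>set_pmf P. 0 < s a * pmf P a"
      using sub by (auto simp: s_def set_pmf_iff pmf_nonneg less_le)
    ultimately show ?thesis unfolding E_sum[OF fin] using fin by (simp add: sum_pos)
  qed
  ultimately show "R_cal l P = E P (\<lambda>p. sqrt (p * (1 - p))) \<and> E P (\<lambda>p. sqrt (p * (1 - p))) > 0"
    by (simp add: s_def)
qed

end
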